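(* Let $M$ be a non-quasianalytic weight sequence and $M'$ a positive sequence. If $M'\prec_{SV}M$, then $M'^{[n]}\prec_{SV}M^{[4n]}$ for all positive integers $n$.
   Context: A weight sequence is $M=(M_k)_{k\ge0}$ with $M_k=\mu_0\cdots\mu_k$, $1=\mu_0\le\mu_1\le\cdots$, $\mu_k\to\infty$; non-quasianalytic if $\sum1/\mu_k<\infty$. For a positive sequence $N$ and $n\in\mathbb{N}_{\ge1}$, $N^{[n]}_j:=N_{nj}^{1/n}$ (for a non-quasianalytic weight sequence $M$, $M^{[n]}$ is again one, with quotients $\mu^{[n]}_j=(\mu_{n(j-1)+1}\cdots\mu_{nj})^{1/n}$). For a positive sequence $M'$ and a non-quasianalytic weight sequence $M$, $M'\prec_{SV}M$ means: $\exists s\in\mathbb{N}_{\ge1}$ with $\sup_{j\ge1}\frac1j\sup_{0\le i<j}(M'_j/(s^jM_i))^{1/(j-i)}\sum_{k\ge j}1/\mu_k<\infty$. *)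

theory Defs
  imports Complex_Main
begin

definition quot :: "(nat \<Rightarrow> real) \<Rightarrow> nat \<Rightarrow> real" where
  "quot M k = (if k = 0 then 1 else M k / M (k - 1))"

definition weight_seq :: "(nat \<Rightarrow> real) \<Rightarrow> bool" where
  "weight_seq M \<longleftrightarrow> M 0 = 1 \<and> (\<forall>k. M k > 0) \<and> mono (quot M)
     \<and> filterlim (quot M) at_top sequentially"

definition nq_weight_seq :: "(nat \<Rightarrow> real) \<Rightarrow> bool" where
  "nq_weight_seq M \<longleftrightarrow> weight_seq M \<and> summable (\<lambda>k. 1 / quot M k)"

definition pow_seq :: "nat \<Rightarrow> (nat \<Rightarrow> real) \<Rightarrow> nat \<Rightarrow> real" where
  "pow_seq n N j = root n (N (n * j))"

text \<open>M' \<prec>_SV M: exists s >= 1 such that the supremum over j >= 1 of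
  (1/j) sup_{0<=i<j} (M'_j/(s^j M_i))^(1/(j-i)) * sum_{k>=j} 1/mu_k is finite
  (all quantities are nonnegative, so finiteness of the sup = boundedness).\<close>
definition SV_prec :: "(nat \<Rightarrow> real) \<Rightarrow> (nat \<Rightarrow> real) \<Rightarrow> bool" where
  "SV_prec M' M \<longleftrightarrow> (\<exists>s::nat. s \<ge> 1 \<and> (\<exists>C::real. \<forall>j\<ge>1. \<forall>i<j.
      (1 / real j) * (M' j / (real s ^ j * M i)) powr (1 / real (j - i))
        * (\<Sum>k. 1 / quot M (k + j)) \<le> C))"

end

theory Submission
  imports Defs
begin

lemma q_ge1: assumes "weight_seq M" shows "quot M k \<ge> 1"
proof -
  have "mono (quot M)" using assms by (simp add: weight_seq_def)
  hence "quot M 0 \<le> quot M k" by (simp add: monoD)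
  thus ?thesis by (simp add: quot_def)
qed

lemma q_mono: assumes "weight_seq M" "a \<le> b" shows "quot M a \<le> quot M b"
  using assms by (simp add: weight_seq_def monoD)

lemma M_pos: assumes "weight_seq M" shows "M k > 0"
  using assms by (simp add: weight_seq_def)

lemma M_step: assumes "weight_seq M" shows "M (Suc k) = M k * quot M (Suc k)"
  using M_pos[OF assms, of k] by (simp add: quot_def)

lemma M_A: assumes "weight_seq M" shows "M (a+b) \<ge> M a * quot M (Suc a) ^ b"
proof (induction b)
  case 0 then show ?case by simp
next
  case (Suc b)
  have "M a * quot M (Suc a) ^ Suc b = (M a * quot M (Suc a) ^ b) * quot M (Suc a)" by simp
  also have "\<dots> \<le> M (a+b) * quot M (Suc (a+b))"
    apply (rule mult_mono)
    using Suc q_mono[OF assms, of "Suc a" "Suc (a+b)"] M_pos[OF assms, of "a+b"] q_ge1[OF assms, of "Suc a"] by auto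
  also have "\<dots> = M (a + Suc b)" using M_step[OF assms, of "a+b"] by simp
  finally show ?case .
qed

lemma M_B: assumes "weight_seq M" shows "M a \<le> quot M a ^ a"
proof (induction a)
  case 0 then show ?case using assms by (simp add: weight_seq_def)
next
  case (Suc a)
  have "M (Suc a) = M a * quot M (Suc a)" by (rule M_step[OF assms])
  also have "\<dots> \<le> quot M a ^ a * quot M (Suc a)"
    using Suc q_ge1[OF assms, of "Suc a"] by simp
  also have "\<dots> \<le> quot M (Suc a) ^ a * quot M (Suc a)"
    apply (rule mult_right_mono)
     apply (rule power_mono) using q_mono[OF assms, of a "Suc a"] q_ge1[OF assms, of a] by auto
  also have "\<dots> = quot M (Suc a) ^ Suc a" by simp
  finally show ?case .
qed

lemma M_C: assumes "weight_seq M" shows "M a ^ 4 \<le> M (4*a)"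
proof -
  have p: "0 < M a" using M_pos[OF assms] .
  have "M a ^ 4 = M a * (M a) ^ 3" by (simp add: power_Suc[symmetric] del: power_Suc)
  also have "\<dots> \<le> M a * (quot M a ^ a) ^ 3"
    using M_B[OF assms, of a] p by (simp add: power_mono)
  also have "\<dots> = M a * quot M a ^ (3*a)" by (simp add: power_mult[symmetric] mult.commute)
  also have "\<dots> \<le> M a * quot M (Suc a) ^ (3*a)"
    using p q_mono[OF assms, of a "Suc a"] q_ge1[OF assms, of a] by (simp add: power_mono)
  also have "\<dots> \<le> M (a + 3*a)" by (rule M_A[OF assms])
  finally show ?thesis by simp
qed

lemma quotN: assumes "weight_seq M" "n > 0" "k \<ge> 1"
  shows "quot (pow_seq n M) k \<ge> quot M (n*(k-1)+1)"
proof -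
  define a where "a = n*(k-1)"
  have nk: "n*k = a + n" using assms(3) by (simp add: a_def algebra_simps)
  have ra: "root n (M a) > 0" using M_pos[OF assms(1)] assms(2) by (simp add: real_root_gt_zero)
  have "root n (M a) * quot M (Suc a) = root n (M a * quot M (Suc a) ^ n)"
    using q_ge1[OF assms(1), of "Suc a"] assms(2) by (simp add: real_root_mult real_root_power_cancel)
  also have "\<dots> \<le> root n (M (n*k))" unfolding nk
    using M_A[OF assms(1), of a n] assms(2) by (simp add: real_root_le_mono)
  finally have "quot M (Suc a) \<le> root n (M (n*k)) / root n (M a)" using ra by (simp add: field_simps)
  thus ?thesis using assms(3) by (simp add: quot_def pow_seq_def a_def)
qed

lemma tailN: assumes "nq_weight_seq M" "n > 0" "j \<ge> 2"
  shows "summable (\<lambda>k. 1 / quot (pow_seq (4*n) M) (k+j)) \<and>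
    (\<Sum>k. 1 / quot (pow_seq (4*n) M) (k+j)) \<le> (\<Sum>k. 1 / quot M (k + n*j)) / n"
proof -
  have W: "weight_seq M" and S: "summable (\<lambda>k. 1 / quot M k)" using assms(1) by (auto simp: nq_weight_seq_def)
  define f where "f m = 1 / quot M (m + n*j)" for m
  have sf: "summable f" unfolding f_def using S by (subst summable_iff_shift)
  define g where "g k = sum f {k*n..<k*n+n}" for k
  have gs: "g sums (suminf f)" unfolding g_def using sums_group[OF summable_sums[OF sf] assms(2)] .
  have pw: "1 / quot (pow_seq (4*n) M) (k+j) \<le> g k / n" for k
  proof -
    obtain K where K: "k + j = K + 2" using assms(3) by (metis add.commute le_add_diff_inverse add_leD2 le_add2)
    have b: "1 / quot (pow_seq (4*n) M) (k+j) \<le> f m" if m: "m \<in> {k*n..<k*n+n}" for m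
    proof -
      have "m + n*j \<le> 4*n*(k+j-1)+1"
      proof -
        have "m + n*j \<le> k*n+n + n*j" using m by simp
        also have "\<dots> = n*(k+j) + n" by (simp add: algebra_simps)
        also have "\<dots> = n*(K+2) + n" using K by simp
        also have "\<dots> \<le> 4*n*(K+1)+1" by (simp add: algebra_simps)
        also have "\<dots> = 4*n*(k+j-1)+1" using K by simp
        finally show ?thesis .
      qed
      hence "quot M (m + n*j) \<le> quot M (4*n*(k+j-1)+1)" by (rule q_mono[OF W])
      also have "\<dots> \<le> quot (pow_seq (4*n) M) (k+j)"
        by (rule quotN[OF W]) (use assms in auto)
      finally have "quot M (m + n*j) \<le> quot (pow_seq (4*n) M) (k+j)" .
      thus ?thesis unfolding f_def using q_ge1[OF W, of "m+n*j"] by (simp add: frac_le)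
    qed
    have "real n * (1 / quot (pow_seq (4*n) M) (k+j)) \<le> g k"
      unfolding g_def using sum_bounded_below[of "{k*n..<k*n+n}" "1 / quot (pow_seq (4*n) M) (k+j)" f] b by simp
    thus ?thesis using assms(2) by (simp add: field_simps)
  qed
  have nn: "0 \<le> 1 / quot (pow_seq (4*n) M) (k+j)" for k
    using quotN[OF W, of "4*n" "k+j"] q_ge1[OF W, of "4*n*(k+j-1)+1"] assms by simp
  have sg: "summable (\<lambda>k. g k / n)" using gs by (intro summable_divide) (rule sums_summable)
  have s1: "summable (\<lambda>k. 1 / quot (pow_seq (4*n) M) (k+j))"
    by (rule summable_comparison_test'[OF sg, of 0]) (use pw nn in auto)
  have "(\<Sum>k. 1 / quot (pow_seq (4*n) M) (k+j)) \<le> (\<Sum>k. g k / n)"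
    by (rule suminf_le[OF pw s1 sg])
  also have "\<dots> = suminf f / n" using gs by (simp add: suminf_divide sums_unique[symmetric] sums_summable)
  finally show ?thesis using s1 by (simp add: f_def[abs_def])
qed

lemma rootN: assumes "weight_seq M" "n > 0"
  shows "root n (M (n*i)) \<le> pow_seq (4*n) M i"
proof -
  have "M (n*i) = root 4 (M (n*i) ^ 4)" using M_pos[OF assms(1), of "n*i"] by (simp add: real_root_power_cancel)
  also have "\<dots> \<le> root 4 (M (4*(n*i)))" using M_C[OF assms(1), of "n*i"] by (simp add: real_root_le_mono)
  finally have "root n (M (n*i)) \<le> root n (root 4 (M (4*(n*i))))" using assms(2) by (simp add: real_root_le_mono)
  also have "\<dots> = root (n*4) (M (4*(n*i)))" by (simp add: real_root_mult_exp)
  finally show ?thesis by (simp add: pow_seq_def ac_simps)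
qed

theorem lemma5p2:
  fixes M M' :: "nat \<Rightarrow> real"
  assumes "nq_weight_seq M"
    and "\<forall>k. M' k > 0"
    and "SV_prec M' M"
  shows "\<forall>n::nat. n \<ge> 1 \<longrightarrow> SV_prec (pow_seq n M') (pow_seq (4 * n) M)"
proof (intro allI impI)
  fix n :: nat assume n1: "n \<ge> 1"
  hence n0: "n > 0" by simp
  have W: "weight_seq M" and S: "summable (\<lambda>k. 1 / quot M k)" using assms(1) by (auto simp: nq_weight_seq_def)
  obtain s C where s: "s \<ge> 1" and HC: "\<forall>j\<ge>1. \<forall>i<j.
      (1 / real j) * (M' j / (real s ^ j * M i)) powr (1 / real (j - i))
        * (\<Sum>k. 1 / quot M (k + j)) \<le> C"
    using assms(3) unfolding SV_prec_def by blast
  define t where "t J = (\<Sum>k. 1 / quot M (k + J))" for J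
  define N where "N = pow_seq (4*n) M"
  define T where "T j = (\<Sum>k. 1 / quot N (k + j))" for j
  have tpos: "t J > 0" for J
    unfolding t_def using summable_iff_shift[of "\<lambda>k. 1 / quot M k" J] S q_ge1[OF W]
    by (intro suminf_pos) (auto intro: order.strict_trans2[OF zero_less_one])
  have C0: "C \<ge> 0"
  proof -
    have "0 \<le> (1 / real 1) * (M' 1 / (real s ^ 1 * M 0)) powr (1 / real (1 - 0)) * t 1"
      using tpos[of 1] by simp
    also have "\<dots> \<le> C" using HC unfolding t_def by auto
    finally show ?thesis .
  qed
  have Tnn: "T j \<ge> 0" if "j \<ge> 1" for j
  proof -
    have "summable (\<lambda>k. 1 / quot N (k + 2))" using tailN[OF assms(1) n0, of 2] by (simp add: N_def)
    hence "summable (\<lambda>k. 1 / quot N k)" by (subst (asm) summable_iff_shift)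
    hence "summable (\<lambda>k. 1 / quot N (k + j))" by (subst summable_iff_shift)
    moreover have "0 \<le> 1 / quot N (k + j)" for k
      using quotN[OF W, of "4*n" "k+j"] q_ge1[OF W, of "4*n*(k+j-1)+1"] n0 that by (simp add: N_def)
    ultimately show ?thesis unfolding T_def by (intro suminf_nonneg)
  qed
  have key: "(1 / real j) * (pow_seq n M' j / (real s ^ j * N i)) powr (1 / real (j - i)) * T j
      \<le> C * n * T j / t (n*j)" if j1: "j \<ge> 1" and ij: "i < j" for i j
  proof -
    define J where "J = n*j"
    define I where "I = n*i"
    have J1: "J \<ge> 1" using j1 n1 by (simp add: J_def)
    have IJ: "I < J" using ij n0 by (simp add: I_def J_def)
    have JI: "real (J - I) = real n * real (j - i)" using ij by (simp add: I_def J_def diff_mult_distrib2 of_nat_diff right_diff_distrib)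
    define x where "x = M' J / (real s ^ J * M I)"
    have xpos: "x > 0" unfolding x_def using assms(2) M_pos[OF W, of I] s by simp
    have h: "(1 / real J) * x powr (1 / real (J - I)) * t J \<le> C"
      using HC J1 IJ unfolding x_def t_def by auto
    have hx: "x powr (1 / real (J - I)) \<le> C * J / t J"
      using h tpos[of J] J1 by (simp add: field_simps)
    define y where "y = pow_seq n M' j / (real s ^ j * N i)"
    have sj: "root n (real s ^ J) = real s ^ j" unfolding J_def
      using n0 by (simp add: mult.commute[of n j] power_mult real_root_power_cancel)
    have rMI: "root n (M I) > 0" using M_pos[OF W] n0 by (simp add: real_root_gt_zero)
    have "y = root n (M' J) / (real s ^ j * N i)" by (simp add: y_def pow_seq_def J_def)
    also have "\<dots> \<le> root n (M' J) / (real s ^ j * root n (M I))"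
    proof (rule divide_left_mono)
      show "real s ^ j * root n (M I) \<le> real s ^ j * N i"
        using rootN[OF W n0, of i] by (intro mult_left_mono) (simp_all add: N_def I_def)
      show "0 \<le> root n (M' J)" using assms(2) n0 by (simp add: less_imp_le)
      have "N i > 0" using M_pos[OF W] n0 by (simp add: N_def pow_seq_def real_root_gt_zero)
      thus "0 < real s ^ j * N i * (real s ^ j * root n (M I))"
        using s rMI by simp
    qed
    also have "\<dots> = root n x" unfolding x_def by (simp add: real_root_divide real_root_mult sj)
    also have "\<dots> = x powr (1 / real n)" using xpos n0 by (simp add: root_powr_inverse)
    finally have yx: "y \<le> x powr (1 / real n)" .
    have ypos: "y \<ge> 0" unfolding y_def N_def pow_seq_def using assms(2) M_pos[OF W] n0 s
      by (simp add: real_root_gt_zero less_imp_le)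
    have "y powr (1 / real (j - i)) \<le> (x powr (1 / real n)) powr (1 / real (j - i))"
      using yx ypos by (intro powr_mono2) auto
    also have "\<dots> = x powr (1 / real (J - I))" by (simp add: powr_powr JI)
    also have "\<dots> \<le> C * J / t J" by (rule hx)
    finally have yb: "y powr (1 / real (j - i)) \<le> C * J / t J" .
    have "(1 / real j) * y powr (1 / real (j - i)) * T j \<le> (1 / real j) * (C * J / t J) * T j"
      using yb Tnn[OF j1] j1 by (intro mult_right_mono mult_left_mono) auto
    also have "\<dots> = C * n * T j / t (n*j)" using j1 by (simp add: J_def)
    finally show ?thesis unfolding y_def .
  qed
  show "SV_prec (pow_seq n M') (pow_seq (4 * n) M)"
    unfolding SV_prec_def
  proof (intro exI conjI allI impI)
    show "s \<ge> 1" by (rule s)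
    fix j i :: nat assume j1: "j \<ge> 1" and ij: "i < j"
    have "(1 / real j) * (pow_seq n M' j / (real s ^ j * N i)) powr (1 / real (j - i)) * T j
        \<le> max C (C * n * T 1 / t n)"
    proof (cases "j \<ge> 2")
      case True
      have Tj: "T j \<le> t (n*j) / n" using tailN[OF assms(1) n0 True] by (simp add: T_def t_def N_def)
      have "C * n * T j / t (n*j) \<le> C * n * (t (n*j) / n) / t (n*j)"
        using Tj C0 tpos[of "n*j"] by (intro divide_right_mono mult_left_mono) auto
      also have "\<dots> = C" using tpos[of "n*j"] n0 by simp
      finally show ?thesis using key[OF j1 ij] by linarith
    next
      case False
      hence "j = 1" using j1 by simp
      thus ?thesis using key[OF j1 ij] by simp
    qed
    thus "(1 / real j) * (pow_seq n M' j / (real s ^ j * pow_seq (4 * n) M i)) powr (1 / real (j - i))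
        * (\<Sum>k. 1 / quot (pow_seq (4 * n) M) (k + j)) \<le> max C (C * n * T 1 / t n)"
      by (simp add: T_def N_def)
  qed
qed

end
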